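(* Let $\psi\in[0,2\pi)$ and let $\kappa\in\mathbb{C}$ with $\operatorname{Im}(\kappa)\neq 0$ satisfy $$\cos(\kappa\cos\psi)+\cos(\kappa\sin\psi)-2=0.$$ Then $$\cos\psi\,\sin(\kappa\cos\psi)+\sin\psi\,\sin(\kappa\sin\psi)\neq 0.$$ *)

theory Defs
  imports Complex_Main
begin

end

theory Submission imports Defs "HOL-Analysis.Analysis" begin

lemma G_sign: fixes w :: real assumes "w \<noteq> 0" shows "w * (exp (-w) - exp w) < 0"
proof (cases "w > 0")
  case True then have "exp (-w) < exp w" by simp
  then show ?thesis using True by (simp add: mult_pos_neg)
next
  case False then have "w < 0" using assms by simp
  then have "exp (-w) > exp w" by simp
  then show ?thesis using \<open>w<0\<close> by (simp add: mult_neg_pos)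
qed

lemma sin0_Im: fixes z :: complex assumes "sin z = 0" shows "Im z = 0"
proof -
  have F: "exp (Im z) + exp (-(Im z)) > 0" by (simp add: add_pos_pos)
  have "Re (sin z) = 0" using assms by simp
  then have "sin (Re z) = 0" using F by (simp add: Re_sin)
  then have "cos (Re z) \<noteq> 0" using sin_cos_squared_add[of "Re z"] by auto
  moreover have "Im (sin z) = 0" using assms by simp
  ultimately have "exp (Im z) = exp (-(Im z))" by (simp add: Im_sin)
  then show ?thesis by simp
qed

lemma cos_sq_neg: fixes z :: complex and r :: real
  assumes "cos z ^ 2 = complex_of_real r" "r < 0" shows "cos (Re z) = 0"
proof -
  define A where "A = Re (cos z)"
  define B where "B = Im (cos z)"
  have 1: "A^2 - B^2 = r" using arg_cong[OF assms(1), of Re] by (simp add: A_def B_def power2_eq_square)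
  have 2: "2*A*B = 0" using arg_cong[OF assms(1), of Im] by (auto simp add: A_def B_def power2_eq_square)
  have "A = 0"
  proof (rule ccontr)
    assume "A \<noteq> 0" then have "B = 0" using 2 by simp
    moreover have "A^2 \<ge> 0" by simp
    moreover have "A^2 = r" using 1 \<open>B = 0\<close> by simp
    ultimately show False using assms(2) by linarith
  qed
  have F: "exp (Im z) + exp (-(Im z)) > 0" by (simp add: add_pos_pos)
  then show ?thesis using \<open>A = 0\<close> by (simp add: A_def Re_cos)
qed

theorem mainTheorem4:
  fixes psi :: real and kappa :: complex
  assumes "0 \<le> psi" and "psi < 2 * pi"
    and "Im kappa \<noteq> 0"
    and "cos (kappa * complex_of_real (cos psi)) + cos (kappa * complex_of_real (sin psi)) - 2 = 0"
  shows "complex_of_real (cos psi) * sin (kappa * complex_of_real (cos psi))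
       + complex_of_real (sin psi) * sin (kappa * complex_of_real (sin psi)) \<noteq> 0"
proof
  assume H: "complex_of_real (cos psi) * sin (kappa * complex_of_real (cos psi))
       + complex_of_real (sin psi) * sin (kappa * complex_of_real (sin psi)) = 0"
  define c where "c = (cos psi + sin psi)/2"
  define d where "d = (cos psi - sin psi)/2"
  define p where "p = kappa * complex_of_real c"
  define q where "q = kappa * complex_of_real d"
  define v where "v = Im kappa"
  have vnz: "v \<noteq> 0" using assms(3) v_def by simp
  have ca: "complex_of_real (cos psi) = of_real c + of_real d"
         "complex_of_real (sin psi) = of_real c - of_real d"
      by (simp_all add: c_def d_def field_simps)
  have ea: "kappa * complex_of_real (cos psi) = p + q"
    unfolding ca p_def q_def by (simp add: distrib_left) 
  have eb: "kappa * complex_of_real (sin psi) = p - q"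
    unfolding ca p_def q_def by (simp add: right_diff_distrib)
  have cd: "c^2 + d^2 = 1/2"
    using sin_cos_squared_add[of psi] by (simp add: c_def d_def power2_eq_square field_simps)
  have PQ: "cos p * cos q = 1"
    using assms(4) unfolding ea eb by (simp add: cos_add cos_diff)
  have ES: "complex_of_real c * sin p * cos q + complex_of_real d * cos p * sin q = 0"
  proof -
    have "2 * (complex_of_real c * sin p * cos q + complex_of_real d * cos p * sin q) = 0"
      using H[unfolded ea eb, unfolded ca] by (simp add: sin_add sin_diff algebra_simps)
    then show ?thesis by (simp only: mult_eq_0_iff) simp
  qed
  define P where "P = cos p"
  define Q where "Q = cos q"
  have s1: "sin p ^2 = 1 - P^2" unfolding P_def by (rule sin_squared_eq)
  have s2: "sin q ^2 = 1 - Q^2" unfolding Q_def by (rule sin_squared_eq)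
  have PQ': "P * Q = 1" using PQ by (simp add: P_def Q_def)
  have key: "(P^2 - 1) * ((complex_of_real d)^2 * P^2 + (complex_of_real c)^2) = 0"
  proof -
    have "(complex_of_real c * sin p * Q)^2 = (complex_of_real d * P * sin q)^2"
      using ES by (simp add: P_def Q_def eq_neg_iff_add_eq_0[symmetric])
    then have "(complex_of_real c)^2 * (1 - P^2) * Q^2 = (complex_of_real d)^2 * P^2 * (1 - Q^2)"
      by (simp add: power_mult_distrib s1 s2)
    then have "P^2 * ((complex_of_real c)^2 * (1 - P^2) * Q^2) = P^2 * ((complex_of_real d)^2 * P^2 * (1 - Q^2))"
      by simp
    then have "(complex_of_real c)^2 * (1 - P^2) * (P*Q)^2 = (complex_of_real d)^2 * P^2 * (P^2 - (P*Q)^2)"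
      by (simp add: algebra_simps power_mult_distrib)
    then have "(complex_of_real c)^2 * (1 - P^2) = (complex_of_real d)^2 * P^2 * (P^2 - 1)"
      using PQ' by simp
    then show ?thesis by algebra
  qed
  show False
  proof (cases "P^2 = 1")
    case True
    then have "sin p = 0" using s1 by simp
    then have "Im p = 0" by (rule sin0_Im)
    then have c0: "c = 0" using vnz by (simp add: p_def v_def)
    have "Q^2 = 1" using True PQ' by (metis power_mult_distrib power_one mult_1)
    then have "sin q = 0" using s2 by simp
    then have "Im q = 0" by (rule sin0_Im)
    then have "d = 0" using vnz by (simp add: q_def v_def)
    then show False using c0 cd by simp
  next
    case False
    then have K: "(complex_of_real d)^2 * P^2 + (complex_of_real c)^2 = 0" using key by simp
    have Pnz: "P \<noteq> 0" "Q \<noteq> 0" using PQ' by auto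
    have dnz: "d \<noteq> 0"
    proof
      assume "d = 0" then have "c = 0" using K by simp
      then show False using cd \<open>d=0\<close> by simp
    qed
    have cnz: "c \<noteq> 0"
    proof
      assume "c = 0" then show False using K dnz Pnz by simp
    qed
    have P2: "P^2 = complex_of_real (-(c^2) / d^2)"
      using K dnz by (simp add: field_simps eq_neg_iff_add_eq_0)
    have "(complex_of_real d)^2 * P^2 * Q^2 + (complex_of_real c)^2 * Q^2 = 0"
      using K by (metis distrib_right mult_zero_left)
    then have "(complex_of_real d)^2 + (complex_of_real c)^2 * Q^2 = 0"
      using PQ' by (metis mult.assoc power_mult_distrib power_one mult_1_right)
    then have Q2: "Q^2 = complex_of_real (-(d^2) / c^2)"
      using cnz by (simp add: field_simps eq_neg_iff_add_eq_0 add.commute)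
    have cp: "cos (Re p) = 0"
      by (rule cos_sq_neg[of p "-(c^2) / d^2"]) (use P2 dnz cnz in \<open>simp_all add: P_def\<close>)
    have cq: "cos (Re q) = 0"
      by (rule cos_sq_neg[of q "-(d^2) / c^2"]) (use Q2 dnz cnz in \<open>simp_all add: Q_def\<close>)
    have sp: "sin (Re p) ^2 = 1" "sin (Re q)^2 = 1"
      using sin_cos_squared_add[of "Re p"] sin_cos_squared_add[of "Re q"] cp cq by simp_all
    define G where "G = (\<lambda>w::real. exp (-w) - exp w)"
    define F where "F = (\<lambda>w::real. exp w + exp (-w))"
    have Ip: "Im p = c * v" "Im q = d * v" by (simp_all add: p_def q_def v_def)
    have "Im (complex_of_real c * sin p * cos q + complex_of_real d * cos p * sin q) = 0"
      using ES by simp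
    moreover have "Im (complex_of_real c * sin p * cos q + complex_of_real d * cos p * sin q) = sin (Re p) * sin (Re q) * (c * F (c* v) * G (d* v) + d * G (c* v) * F (d* v)) / 4"
      using cp cq Ip by (simp add: Re_sin Im_sin Re_cos Im_cos F_def G_def field_simps)
    ultimately have "sin (Re p) * sin (Re q) * (c * F (c* v) * G (d* v) + d * G (c* v) * F (d* v)) / 4 = 0"
      by simp
    moreover have "sin (Re p) * sin (Re q) \<noteq> 0" using sp by auto
    ultimately have X: "c * F (c* v) * G (d* v) + d * G (c* v) * F (d* v) = 0" by simp
    have g1: "(d* v) * G (d* v) < 0" "(c* v) * G (c* v) < 0"
      using G_sign dnz cnz vnz by (simp_all add: G_def)
    have "((d* v) * G (d* v)) * ((c* v) * G (c* v)) > 0" using g1 by (simp add: mult_neg_neg)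
    then have pos: "(c * G (d* v)) * (d * G (c* v)) * (v * v) > 0" by (simp add: algebra_simps)
    have "(c * G (d* v)) * (d * G (c* v)) > 0"
      using pos vnz by (metis zero_less_mult_pos2 not_real_square_gt_zero)
    moreover have "F (c* v) > 0" "F (d* v) > 0" by (simp_all add: F_def add_pos_pos)
    ultimately have "F (c* v) * (c * G (d* v)) + F (d* v) * (d * G (c* v)) \<noteq> 0"
    proof -
      assume A: "(c * G (d* v)) * (d * G (c* v)) > 0" "F (c* v) > 0" "F (d* v) > 0"
      show ?thesis
      proof (cases "c * G (d* v) > 0")
        case True
        then have "d * G (c* v) > 0" using A(1) zero_less_mult_pos by blast
        then have "F (c* v) * (c * G (d* v)) + F (d* v) * (d * G (c* v)) > 0" using True A by (simp add: add_pos_pos)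
        then show ?thesis by simp
      next
        case False
        have "c * G (d* v) \<noteq> 0" using A(1) by auto
        then have n1: "c * G (d* v) < 0" using False by linarith
        have "d * G (c* v) < 0"
        proof (rule ccontr)
          assume "\<not> d * G (c* v) < 0"
          then have "d * G (c* v) \<ge> 0" by simp
          then have "(c * G (d* v)) * (d * G (c* v)) \<le> 0" using n1 by (simp add: mult_nonpos_nonneg)
          then show False using A(1) by simp
        qed
        then have "F (c* v) * (c * G (d* v)) + F (d* v) * (d * G (c* v)) < 0"
          using n1 A by (simp add: mult_pos_neg add_neg_neg)
        then show ?thesis by simp
      qed
    qed
    then show False using X by (simp add: algebra_simps)
  qed
qed

end
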